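(* Let $p\in\mathbb{T}^{\mathcal{P}([n])}$ be a tropical Wick vector. Then the cocycle space $\mathcal{Q}(p)\subseteq\mathbb{T}^{\mathcal{J}}$ of $p$ is the set of admissible vectors in the tropical convex hull of the cocircuits of $p$.
   Context: $\mathbb{T}=\mathbb{R}\cup\{\infty\}$ with $\oplus=\min$, $\odot=+$; $\mathcal{P}([n])$ the set of subsets of $[n]$. A tropical Wick vector is $p$ such that for all $S,T\subseteq[n]$ the minimum $\min_{i\in S\Delta T}(p_{S\Delta\{i\}}+p_{T\Delta\{i\}})$ is attained at least twice or equals $\infty$. Let $\mathcal{J}=\{1,\dots,n,1^*,\dots,n^*\}$ with involution $i\leftrightarrow i^*$; $X\subseteq\mathcal{J}$ is admissible if $X\cap X^*=\emptyset$, and a vector in $\mathbb{T}^{\mathcal{J}}$ is admissible if its support (coordinates $\neq\infty$) is admissible. For $S\subseteq[n]$ let $\bar S=S\cup\{i^*:i\in[n]\setminus S\}$ and $\bar p_{\bar S}:=p_S$. For $T\subseteq[n]$: $(c_T)_i=\bar p_{\bar T\Delta\{i,i^*\}}$ if $i\in\bar T$, $\infty$ otherwise; $(c^*_T)_i=\bar p_{\bar T\Delta\{i,i^*\}}$ if $i\notin\bar T$, $\infty$ otherwise. Circuits of $p$: $c_T+\lambda\mathbf{1}$ ($\lambda\in\mathbb{R}$) with nonempty support; cocircuits: $c^*_T+\lambda\mathbf{1}$ with nonempty support. $x,y$ are tropically orthogonal if $\min_k(x_k+y_k)$ is attained at least twice or equals $\infty$. The cocycle space $\mathcal{Q}(p)$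 is the set of admissible vectors tropically orthogonal to all circuits of $p$. The tropical convex hull of a set $A$ is the set of finite tropical linear combinations $\lambda_1\odot a_1\oplus\cdots\oplus\lambda_r\odot a_r$, $a_k\in A$, $\lambda_k\in\mathbb{T}$. *)

theory Defs
  imports "HOL-Library.Extended_Real"
begin

text \<open>Tropical numbers T = R \<union> {\<infinity>} are modelled as extended reals different from -\<infinity>;
  tropical addition is min, tropical multiplication is +.
  The index set J = {1..n, 1*..n*} is modelled inside nat + nat:
  Inl i stands for i, Inr i stands for i*.\<close>

definition Jset :: "nat \<Rightarrow> (nat + nat) set" where
  "Jset n = Inl ` {1..n} \<union> Inr ` {1..n}"

fun star :: "nat + nat \<Rightarrow> nat + nat" where
  "star (Inl i) = Inr i"
| "star (Inr i) = Inl i"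

definition min_twice :: "'a set \<Rightarrow> ('a \<Rightarrow> ereal) \<Rightarrow> bool" where
  "min_twice A f \<longleftrightarrow> (INF a\<in>A. f a) = \<infinity> \<or>
     (\<exists>a\<in>A. \<exists>b\<in>A. a \<noteq> b \<and> f a = (INF c\<in>A. f c) \<and> f b = (INF c\<in>A. f c))"

text \<open>Tropical Wick vector p in T^{P([n])} (only its values on subsets of [n] matter).\<close>
definition tropical_wick :: "nat \<Rightarrow> (nat set \<Rightarrow> ereal) \<Rightarrow> bool" where
  "tropical_wick n p \<longleftrightarrow>
     (\<forall>S. S \<subseteq> {1..n} \<longrightarrow> p S \<noteq> -\<infinity>) \<and>
     (\<exists>S. S \<subseteq> {1..n} \<and> p S \<noteq> \<infinity>) \<and>
     (\<forall>S T. S \<subseteq> {1..n} \<longrightarrow> T \<subseteq> {1..n} \<longrightarrow>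
        min_twice (sym_diff S T) (\<lambda>i. p (sym_diff S {i}) + p (sym_diff T {i})))"

text \<open>Vectors in T^J: no coordinate -\<infinity>, and value \<infinity> outside J (coordinates outside J are dummies).\<close>
definition tvec :: "nat \<Rightarrow> (nat + nat \<Rightarrow> ereal) \<Rightarrow> bool" where
  "tvec n x \<longleftrightarrow> (\<forall>k. x k \<noteq> -\<infinity>) \<and> (\<forall>k. k \<notin> Jset n \<longrightarrow> x k = \<infinity>)"

definition supp :: "nat \<Rightarrow> (nat + nat \<Rightarrow> ereal) \<Rightarrow> (nat + nat) set" where
  "supp n x = {k \<in> Jset n. x k \<noteq> \<infinity>}"

definition admissible_set :: "(nat + nat) set \<Rightarrow> bool" where
  "admissible_set X \<longleftrightarrow> X \<inter> star ` X = {}"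

definition admissible_vec :: "nat \<Rightarrow> (nat + nat \<Rightarrow> ereal) \<Rightarrow> bool" where
  "admissible_vec n x \<longleftrightarrow> tvec n x \<and> admissible_set (supp n x)"

definition bar :: "nat \<Rightarrow> nat set \<Rightarrow> (nat + nat) set" where
  "bar n S = Inl ` S \<union> Inr ` ({1..n} - S)"

definition unbar :: "(nat + nat) set \<Rightarrow> nat set" where
  "unbar X = {i. Inl i \<in> X}"

definition pbar :: "(nat set \<Rightarrow> ereal) \<Rightarrow> (nat + nat) set \<Rightarrow> ereal" where
  "pbar p X = p (unbar X)"

definition circ_vec :: "nat \<Rightarrow> (nat set \<Rightarrow> ereal) \<Rightarrow> nat set \<Rightarrow> nat + nat \<Rightarrow> ereal" where
  "circ_vec n p T k =
     (if k \<in> Jset n \<and> k \<in> bar n T then pbar p (sym_diff (bar n T) {k, star k}) else \<infinity>)"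

definition cocirc_vec :: "nat \<Rightarrow> (nat set \<Rightarrow> ereal) \<Rightarrow> nat set \<Rightarrow> nat + nat \<Rightarrow> ereal" where
  "cocirc_vec n p T k =
     (if k \<in> Jset n \<and> k \<notin> bar n T then pbar p (sym_diff (bar n T) {k, star k}) else \<infinity>)"

definition circuits :: "nat \<Rightarrow> (nat set \<Rightarrow> ereal) \<Rightarrow> (nat + nat \<Rightarrow> ereal) set" where
  "circuits n p = {x. \<exists>T (t::real). T \<subseteq> {1..n} \<and> x = (\<lambda>k. circ_vec n p T k + ereal t) \<and> supp n x \<noteq> {}}"

definition cocircuits :: "nat \<Rightarrow> (nat set \<Rightarrow> ereal) \<Rightarrow> (nat + nat \<Rightarrow> ereal) set" where
  "cocircuits n p = {x. \<exists>T (t::real). T \<subseteq> {1..n} \<and> x = (\<lambda>k. cocirc_vec n p T k + ereal t) \<and> supp n x \<noteq> {}}"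

definition trop_orth :: "nat \<Rightarrow> (nat + nat \<Rightarrow> ereal) \<Rightarrow> (nat + nat \<Rightarrow> ereal) \<Rightarrow> bool" where
  "trop_orth n x y \<longleftrightarrow> min_twice (Jset n) (\<lambda>k. x k + y k)"

definition cocycle_space :: "nat \<Rightarrow> (nat set \<Rightarrow> ereal) \<Rightarrow> (nat + nat \<Rightarrow> ereal) set" where
  "cocycle_space n p = {x. admissible_vec n x \<and> (\<forall>c\<in>circuits n p. trop_orth n x c)}"

definition trop_hull :: "(nat + nat \<Rightarrow> ereal) set \<Rightarrow> (nat + nat \<Rightarrow> ereal) set" where
  "trop_hull A = {x. \<exists>F lam. finite F \<and> F \<subseteq> A \<and> (\<forall>a\<in>F. lam a \<noteq> -\<infinity>) \<and>
                       x = (\<lambda>k. INF a\<in>F. lam a + a k)}"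

end

theory Submission
  imports Defs
begin

definition idx :: "nat + nat \<Rightarrow> nat" where
  "idx k = (case k of Inl i \<Rightarrow> i | Inr i \<Rightarrow> i)"

lemma idx_simps[simp]: "idx (Inl i) = i" "idx (Inr i) = i"
  by (simp_all add: idx_def)

lemma idx_star[simp]: "idx (star k) = idx k"
  by (cases k) auto

lemma star_star[simp]: "star (star k) = k"
  by (cases k) auto

lemma star_neq[simp]: "star k \<noteq> k"
  by (cases k) auto

lemma Jset_iff: "k \<in> Jset n \<longleftrightarrow> idx k \<in> {1..n}"
  by (cases k) (auto simp: Jset_def)

lemma star_Jset[simp]: "star k \<in> Jset n \<longleftrightarrow> k \<in> Jset n"
  by (simp add: Jset_iff)

lemma finite_Jset[simp]: "finite (Jset n)"
  by (simp add: Jset_def)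

lemma idx_eq: "idx k' = idx k \<Longrightarrow> k' = k \<or> k' = star k"
  by (cases k; cases k') auto

lemma bar_mem: "V \<subseteq> {1..n} \<Longrightarrow> k \<in> Jset n \<Longrightarrow>
   k \<in> bar n V \<longleftrightarrow> (k = Inl (idx k) \<longleftrightarrow> idx k \<in> V)"
  by (cases k) (auto simp: bar_def Jset_def)

lemma star_bar: "V \<subseteq> {1..n} \<Longrightarrow> k \<in> Jset n \<Longrightarrow> star k \<in> bar n V \<longleftrightarrow> k \<notin> bar n V"
  by (cases k) (auto simp: bar_def Jset_def)

lemma bar_sub_J: "V \<subseteq> {1..n} \<Longrightarrow> bar n V \<subseteq> Jset n"
  by (auto simp: bar_def Jset_def)


lemma flip_sub: "V \<subseteq> {1..n} \<Longrightarrow> k \<in> Jset n \<Longrightarrow> sym_diff V {idx k} \<subseteq> {1..n}"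
  by (auto simp: Jset_iff)

lemma flip_other: "V \<subseteq> {1..n} \<Longrightarrow> k \<in> Jset n \<Longrightarrow> k' \<in> Jset n \<Longrightarrow> idx k' \<noteq> idx k \<Longrightarrow>
   k' \<in> bar n (sym_diff V {idx k}) \<longleftrightarrow> k' \<in> bar n V"
  by (cases k; cases k') (auto simp: bar_def Jset_def)

lemma flip_self: "V \<subseteq> {1..n} \<Longrightarrow> k \<in> Jset n \<Longrightarrow>
   k \<in> bar n (sym_diff V {idx k}) \<longleftrightarrow> k \<notin> bar n V"
  by (cases k) (auto simp: bar_def Jset_def)

lemma flip_bar: "V \<subseteq> {1..n} \<Longrightarrow> k \<in> Jset n \<Longrightarrow> k \<in> bar n V \<Longrightarrow>
   bar n (sym_diff V {idx k}) = insert (star k) (bar n V - {k})"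
  by (cases k) (auto simp: bar_def Jset_def)

lemma unbar_flip: "unbar (sym_diff (bar n T) {k, star k}) = sym_diff T {idx k}"
  by (cases k) (auto simp: bar_def unbar_def)

lemma circ_alt: "circ_vec n p T k = (if k \<in> Jset n \<and> k \<in> bar n T then p (sym_diff T {idx k}) else \<infinity>)"
  unfolding circ_vec_def pbar_def unbar_flip by simp

lemma cocirc_alt: "cocirc_vec n p T k = (if k \<in> Jset n \<and> k \<notin> bar n T then p (sym_diff T {idx k}) else \<infinity>)"
  unfolding cocirc_vec_def pbar_def unbar_flip by simp

lemma min_twice_iff: "min_twice A f \<longleftrightarrow> (\<forall>a\<in>A. f a = \<infinity>) \<or>
   (\<exists>a\<in>A. \<exists>b\<in>A. a \<noteq> b \<and> f a = f b \<and> (\<forall>c\<in>A. f a \<le> f c))"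
proof -
  have e: "f a = (INF c\<in>A. f c) \<longleftrightarrow> (\<forall>c\<in>A. f a \<le> f c)" if "a \<in> A" for a
    using that by (auto intro: antisym INF_lower INF_greatest)
  have t: "(INF c\<in>A. f c) = \<infinity> \<longleftrightarrow> (\<forall>a\<in>A. f a = \<infinity>)"
    using INF_top_conv(1)[of f A] by (simp add: top_ereal_def)
  show ?thesis unfolding min_twice_def t
  proof (intro iffI)
    assume "(\<forall>a\<in>A. f a = \<infinity>) \<or> (\<exists>a\<in>A. \<exists>b\<in>A. a \<noteq> b \<and> f a = Inf (f ` A) \<and> f b = Inf (f ` A))"
    then show "(\<forall>a\<in>A. f a = \<infinity>) \<or> (\<exists>a\<in>A. \<exists>b\<in>A. a \<noteq> b \<and> f a = f b \<and> (\<forall>c\<in>A. f a \<le> f c))"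
      using e by metis
  next
    assume "(\<forall>a\<in>A. f a = \<infinity>) \<or> (\<exists>a\<in>A. \<exists>b\<in>A. a \<noteq> b \<and> f a = f b \<and> (\<forall>c\<in>A. f a \<le> f c))"
    then show "(\<forall>a\<in>A. f a = \<infinity>) \<or> (\<exists>a\<in>A. \<exists>b\<in>A. a \<noteq> b \<and> f a = Inf (f ` A) \<and> f b = Inf (f ` A))"
      using e by metis
  qed
qed


definition fsum :: "nat \<Rightarrow> (nat + nat) set \<Rightarrow> (nat + nat \<Rightarrow> real) \<Rightarrow> nat set \<Rightarrow> real" where
  "fsum n Y h V = sum h (bar n V \<inter> Y)"

lemma finite_bar: "finite (bar n V \<inter> Y)" if "V \<subseteq> {1..n}"
  using bar_sub_J[OF that] finite_Jset by (meson finite_Int finite_subset)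

lemma fsum_flip: assumes "V \<subseteq> {1..n}" "k \<in> Jset n" "k \<in> bar n V"
  shows "fsum n Y h (sym_diff V {idx k}) = fsum n Y h V - (if k \<in> Y then h k else 0)
          + (if star k \<in> Y then h (star k) else 0)"
proof -
  have sb: "star k \<notin> bar n V" using star_bar[OF assms(1,2)] assms(3) by simp
  have fin: "finite (bar n V \<inter> Y)" by (rule finite_bar[OF assms(1)])
  have eq: "bar n (sym_diff V {idx k}) \<inter> Y = (if star k \<in> Y then insert (star k) ((bar n V \<inter> Y) - {k}) else (bar n V \<inter> Y) - {k})"
    using flip_bar[OF assms] by auto
  have s1: "sum h ((bar n V \<inter> Y) - {k}) = sum h (bar n V \<inter> Y) - (if k \<in> Y then h k else 0)"
    using fin assms(3) by (simp add: sum_diff1)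
  show ?thesis unfolding fsum_def eq
    using s1 fin sb by (auto simp: sum.insert)
qed

lemma fsum_flip': assumes "V \<subseteq> {1..n}" "k \<in> Jset n" "k \<notin> bar n V"
  shows "fsum n Y h (sym_diff V {idx k}) = fsum n Y h V - (if star k \<in> Y then h (star k) else 0)
          + (if k \<in> Y then h k else 0)"
  using fsum_flip[OF assms(1), of "star k"] assms star_bar[OF assms(1,2)] by simp

lemma finite_argmin:
  fixes f :: "'a \<Rightarrow> 'b::linorder"
  assumes "finite A" "A \<noteq> {}" shows "\<exists>a\<in>A. \<forall>b\<in>A. f a \<le> f b"
proof -
  have "Min (f ` A) \<in> f ` A" using assms by simp
  then obtain a where a: "a \<in> A" "f a = Min (f ` A)" by auto
  have "\<forall>b\<in>A. f a \<le> f b"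
  proof
    fix b assume "b \<in> A"
    then have "f b \<in> f ` A" by simp
    then show "f a \<le> f b" using a(2) Min_le[OF finite_imageI[OF assms(1)]] by simp
  qed
  then show ?thesis using a(1) by blast
qed

lemma finite_argmax:
  fixes f :: "'a \<Rightarrow> 'b::linorder"
  assumes "finite A" "A \<noteq> {}" shows "\<exists>a\<in>A. \<forall>b\<in>A. f b \<le> f a"
proof -
  have "Max (f ` A) \<in> f ` A" using assms by simp
  then obtain a where a: "a \<in> A" "f a = Max (f ` A)" by auto
  have "\<forall>b\<in>A. f b \<le> f a"
  proof
    fix b assume "b \<in> A"
    then have "f b \<in> f ` A" by simp
    then show "f b \<le> f a" using a(2) Max_ge[OF finite_imageI[OF assms(1)]] by simp
  qed
  then show ?thesis using a(1) by blast
qed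

lemma hull_orth:
  fixes c :: "'b \<Rightarrow> ereal" and lam :: "('b \<Rightarrow> ereal) \<Rightarrow> ereal"
  assumes finJ: "finite J" and finF: "finite F"
    and orth: "\<And>a. a \<in> F \<Longrightarrow> min_twice J (\<lambda>k. a k + c k)"
  shows "min_twice J (\<lambda>k. (INF a\<in>F. lam a + a k) + c k)"
proof (cases "F = {}")
  case True then show ?thesis by (simp add: min_twice_iff top_ereal_def)
next
  case Fne: False
  define z where "z k = (INF a\<in>F. lam a + a k)" for k
  define g where "g k = z k + c k" for k
  show ?thesis
  proof (cases "J = {}")
    case True then show ?thesis by (simp add: min_twice_iff)
  next
    case Jne: False
    obtain k1 where k1: "k1 \<in> J" "\<And>k. k \<in> J \<Longrightarrow> g k1 \<le> g k"
      using finite_argmin[OF finJ Jne, of g] by blast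
    show ?thesis
    proof (cases "g k1 = \<infinity>")
      case True
      then have "\<forall>k\<in>J. g k = \<infinity>" using k1 by (metis top_ereal_def top_le)
      then show ?thesis by (simp add: min_twice_iff g_def z_def)
    next
      case gfin: False
      obtain a where a: "a \<in> F" "\<And>b. b \<in> F \<Longrightarrow> lam a + a k1 \<le> lam b + b k1"
        using finite_argmin[OF finF Fne, of "\<lambda>b. lam b + b k1"] by blast
      have za: "z k1 = lam a + a k1"
        unfolding z_def using a by (auto intro!: antisym INF_lower INF_greatest)
      have zle: "z k \<le> lam a + a k" for k unfolding z_def using a(1) by (rule INF_lower)
      define h where "h k = a k + c k" for k
      have gh: "g k \<le> lam a + h k" for k
        unfolding g_def h_def using add_right_mono[OF zle[of k], of "c k"] by (simp add: add.assoc)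
      have gk1: "g k1 = lam a + h k1" unfolding g_def h_def za by (simp add: add.assoc)
      from orth[OF a(1)] have "min_twice J h" unfolding h_def by simp
      then consider "\<forall>k\<in>J. h k = \<infinity>" | a' b' where "a' \<in> J" "b' \<in> J" "a' \<noteq> b'" "h a' = h b'"
          "\<And>k. k \<in> J \<Longrightarrow> h a' \<le> h k"
        unfolding min_twice_iff by blast
      then show ?thesis
      proof cases
        case 1
        then have "g k1 = \<infinity>" using gk1 k1(1) by simp
        then show ?thesis using gfin by simp
      next
        case 2
        have "g a' \<le> g k1"
          using gh[of a'] add_left_mono[OF 2(5)[OF k1(1)], of "lam a"] gk1 by simp
        then have ga: "g a' = g k1" using k1 2(1) by (simp add: antisym)
        have "g b' \<le> g k1"
          using gh[of b'] add_left_mono[OF 2(5)[OF k1(1)], of "lam a"] gk1 2(4) by simp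
        then have gb: "g b' = g k1" using k1 2(2) by (simp add: antisym)
        have "\<forall>k\<in>J. g a' \<le> g k" using ga k1(2) by simp
        then have "\<exists>a\<in>J. \<exists>b\<in>J. a \<noteq> b \<and> g a = g b \<and> (\<forall>c\<in>J. g a \<le> g c)"
          using 2(1,2,3) ga gb by (intro bexI[of _ a'] bexI[of _ b']) auto
        then show ?thesis unfolding min_twice_iff g_def z_def by blast
      qed
    qed
  qed
qed

lemma cocirc_circ_orth:
  assumes wick: "tropical_wick n p" and S: "S \<subseteq> {1..n}" and T: "T \<subseteq> {1..n}"
  shows "min_twice (Jset n) (\<lambda>k. (cocirc_vec n p T k + ereal t) + (circ_vec n p S k + ereal s))"
proof -
  define g where "g i = p (sym_diff S {i}) + p (sym_diff T {i})" for i
  from wick S T have w: "min_twice (sym_diff S T) g"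
    unfolding tropical_wick_def g_def by blast
  define e where "e k = (cocirc_vec n p T k + ereal t) + (circ_vec n p S k + ereal s)" for k
  define \<phi> where "\<phi> i = (if i \<in> S then Inl i else Inr i)" for i
  have e1: "e k = g (idx k) + ereal (s + t) \<and> idx k \<in> sym_diff S T \<and> \<phi> (idx k) = k"
    if "k \<in> Jset n" "k \<notin> bar n T" "k \<in> bar n S" for k
  proof -
    have "e k = (p (sym_diff T {idx k}) + ereal t) + (p (sym_diff S {idx k}) + ereal s)"
      unfolding e_def cocirc_alt circ_alt using that by simp
    also have "\<dots> = g (idx k) + ereal (s + t)" unfolding g_def plus_ereal.simps(1)[symmetric] by (simp only: ac_simps)
    finally show ?thesis using that S T by (cases k) (auto simp: bar_def Jset_def \<phi>_def)
  qed
  have e2: "e k = \<infinity>" if "k \<notin> Jset n \<or> k \<in> bar n T \<or> k \<notin> bar n S" for k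
    unfolding e_def cocirc_alt circ_alt using that by auto
  have phi: "\<phi> i \<in> Jset n \<and> \<phi> i \<notin> bar n T \<and> \<phi> i \<in> bar n S \<and> idx (\<phi> i) = i"
    if "i \<in> sym_diff S T" for i
    using that S T by (auto simp: bar_def Jset_def \<phi>_def)
  from w consider "\<forall>i\<in>sym_diff S T. g i = \<infinity>"
    | a b where "a \<in> sym_diff S T" "b \<in> sym_diff S T" "a \<noteq> b" "g a = g b"
        "\<And>c. c \<in> sym_diff S T \<Longrightarrow> g a \<le> g c"
    unfolding min_twice_iff by blast
  then have "min_twice (Jset n) e"
  proof cases
    case 1
    have "e k = \<infinity>" if "k \<in> Jset n" for k
      using e1[of k] e2[of k] 1 that by (cases "k \<notin> bar n T \<and> k \<in> bar n S") auto
    then show ?thesis by (simp add: min_twice_iff)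
  next
    case 2
    have ea: "e (\<phi> a) = g a + ereal (s + t)" using e1 phi 2(1) by metis
    have eb: "e (\<phi> b) = g b + ereal (s + t)" using e1 phi 2(2) by metis
    have le: "e (\<phi> a) \<le> e k" if "k \<in> Jset n" for k
    proof (cases "k \<notin> bar n T \<and> k \<in> bar n S")
      case True
      then have "e k = g (idx k) + ereal (s + t)" "idx k \<in> sym_diff S T" using e1 that by auto
      then show ?thesis using ea add_right_mono[OF 2(5)] by metis
    next
      case False then show ?thesis using e2 by simp
    qed
    have pa: "\<phi> a \<in> Jset n" "idx (\<phi> a) = a" using phi 2(1) by auto
    have pb: "\<phi> b \<in> Jset n" "idx (\<phi> b) = b" using phi 2(2) by auto
    have "\<phi> a \<noteq> \<phi> b" using pa pb 2(3) by metis
    then have "\<exists>a\<in>Jset n. \<exists>b\<in>Jset n. a \<noteq> b \<and> e a = e b \<and> (\<forall>c\<in>Jset n. e a \<le> e c)"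
      using pa(1) pb(1) ea eb 2(4) le by metis
    then show ?thesis unfolding min_twice_iff by blast
  qed
  then show ?thesis unfolding e_def .
qed

lemma key:
  assumes wick: "tropical_wick n p" and xQ: "x \<in> cocycle_space n p" and k0X: "k0 \<in> supp n x"
  shows "\<exists>d\<in>cocircuits n p. (\<forall>k. x k \<le> d k) \<and> d k0 = x k0"
proof -
  define J where "J = Jset n"
  define X where "X = supp n x"
  define N where "N = J - X"
  define xr where "xr k = real_of_ereal (x k)" for k
  define m where "m V = fsum n N (\<lambda>_. 1) V" for V
  define \<sigma> where "\<sigma> V = fsum n X xr V" for V
  define W where "W V = real_of_ereal (p V) - \<sigma> V" for V
  define C where "C = {V. V \<subseteq> {1..n} \<and> p V \<noteq> \<infinity>}"
  have adm: "admissible_vec n x" and orth: "\<forall>c\<in>circuits n p. trop_orth n x c"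
    using xQ by (auto simp: cocycle_space_def)
  have tv: "\<forall>k. x k \<noteq> -\<infinity>" "\<forall>k. k \<notin> J \<longrightarrow> x k = \<infinity>"
    using adm by (auto simp: admissible_vec_def tvec_def J_def)
  have XJ: "X \<subseteq> J" by (auto simp: X_def supp_def J_def)
  have Xfin: "x k = ereal (xr k)" if "k \<in> X" for k
    using that tv(1) by (cases "x k") (auto simp: X_def supp_def xr_def)
  have Xstar: "star k \<notin> X" if "k \<in> X" for k
    using adm that unfolding admissible_vec_def admissible_set_def X_def
    by (metis IntI empty_iff image_eqI star_star)
  have XI: "k \<in> X" if "k \<in> J" "x k \<noteq> \<infinity>" for k
    using that by (simp add: X_def supp_def J_def)
  have pnm: "p V \<noteq> -\<infinity>" if "V \<subseteq> {1..n}" for V using wick that by (auto simp: tropical_wick_def)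
  have Cfin: "finite C" by (rule finite_subset[of _ "Pow {1..n}"]) (auto simp: C_def)
  have Cne: "C \<noteq> {}" using wick by (auto simp: tropical_wick_def C_def)
  have preal: "p V = ereal (real_of_ereal (p V))" if "V \<in> C" for V
    using that pnm by (cases "p V") (auto simp: C_def)
  obtain U1 where U1: "U1 \<in> C" "\<forall>V\<in>C. m V \<le> m U1" using finite_argmax[OF Cfin Cne, of m] by blast
  define M where "M = m U1"
  define C' where "C' = {V\<in>C. m V = M}"
  have C'fin: "finite C'" using Cfin by (simp add: C'_def)
  have C'ne: "C' \<noteq> {}" using U1 by (auto simp: C'_def M_def)
  obtain U2 where U2: "U2 \<in> C'" "\<forall>V\<in>C'. W U2 \<le> W V" using finite_argmin[OF C'fin C'ne, of W] by blast
  define Opt where "Opt U \<longleftrightarrow> U \<in> C \<and> m U = M \<and> (\<forall>V\<in>C. m V = M \<longrightarrow> W U \<le> W V)" for U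
  have mM: "m V \<le> M" if "V \<in> C" for V using U1 that by (simp add: M_def)
  have OptU2: "Opt U2" using U2 by (auto simp: Opt_def C'_def)
  have k0X': "k0 \<in> X" using k0X by (simp add: X_def)
  have k0J: "k0 \<in> J" using k0X' XJ by auto
  define i0 where "i0 = idx k0"
  have k0N: "k0 \<notin> N" using k0X' by (simp add: N_def)
  have sk0N: "star k0 \<in> N" using Xstar[OF k0X'] k0J by (simp add: N_def J_def)
  have sk0X: "star k0 \<notin> X" using Xstar[OF k0X'] .
  obtain U where OptU: "Opt U" and k0U: "k0 \<in> bar n U"
  proof (cases "k0 \<in> bar n U2")
    case True then show ?thesis using that OptU2 by blast
  next
    case False
    have UC: "U2 \<subseteq> {1..n}" "p U2 \<noteq> \<infinity>" using OptU2 by (auto simp: Opt_def C_def)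
    define U0 where "U0 = sym_diff U2 {i0}"
    have k0J': "k0 \<in> Jset n" using k0J by (simp add: J_def)
    have U0sub: "U0 \<subseteq> {1..n}" using flip_sub[OF UC(1) k0J'] by (simp add: U0_def i0_def)
    have k0U0: "k0 \<in> bar n U0" using flip_self[OF UC(1) k0J'] False by (simp add: U0_def i0_def)
    have U0U: "sym_diff U0 {i0} = U2" by (auto simp: U0_def)
    define c where "c = (\<lambda>k. circ_vec n p U0 k + ereal 0)"
    have ck0: "c k0 = p U2" unfolding c_def circ_alt using k0J' k0U0 U0U by (simp add: i0_def)
    have "c \<in> circuits n p"
    proof -
      have "k0 \<in> supp n c" using ck0 UC k0J' by (simp add: supp_def)
      then show ?thesis unfolding circuits_def using U0sub
        by (intro CollectI exI[of _ U0] exI[of _ "0::real"]) (auto simp: c_def)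
    qed
    then have mt: "min_twice J (\<lambda>k. x k + c k)" using orth by (simp add: trop_orth_def J_def)
    define f where "f k = x k + c k" for k
    obtain pu where pu: "p U2 = ereal pu" using UC pnm[OF UC(1)] by (cases "p U2") auto
    have fk0: "f k0 = ereal (xr k0 + pu)" unfolding f_def ck0 using Xfin[OF k0X'] pu by simp
    obtain k where k: "k \<in> J" "k \<noteq> k0" "f k \<le> f k0"
    proof -
      from mt consider "\<forall>k\<in>J. f k = \<infinity>" | a b where "a \<in> J" "b \<in> J" "a \<noteq> b" "f a = f b"
          "\<forall>c\<in>J. f a \<le> f c"
        unfolding min_twice_iff f_def by blast
      then show ?thesis
      proof cases
        case 1 then show ?thesis using fk0 k0J by auto
      next
        case 2 then show ?thesis using that k0J by metis
      qed
    qed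
    have fkfin: "f k \<noteq> \<infinity>" using k(3) fk0 by auto
    have kJ': "k \<in> Jset n" using k(1) by (simp add: J_def)
    have kbar: "k \<in> bar n U0" and xk: "x k \<noteq> \<infinity>"
      using fkfin kJ' unfolding f_def c_def circ_alt by (auto split: if_splits)
    have kX: "k \<in> X" using XI[OF k(1) xk] .
    define V where "V = sym_diff U0 {idx k}"
    have fk: "f k = x k + p V" unfolding f_def c_def circ_alt V_def using kJ' kbar by simp
    have Vsub: "V \<subseteq> {1..n}" using flip_sub[OF U0sub kJ'] by (simp add: V_def)
    have pV: "p V \<noteq> \<infinity>" using fkfin fk by auto
    obtain pv where pv: "p V = ereal pv" using pV pnm[OF Vsub] by (cases "p V") auto
    have VC: "V \<in> C" using Vsub pV by (simp add: C_def)
    have idxne: "idx k0 \<noteq> idx k"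
    proof
      assume "idx k0 = idx k"
      then have "k = k0 \<or> k = star k0" using idx_eq by metis
      then show False using k(2) kbar k0U0 star_bar[OF U0sub k0J'] by auto
    qed
    have k0V: "k0 \<in> bar n V" using flip_other[OF U0sub kJ' k0J' idxne] k0U0 by (simp add: V_def)
    have kN: "k \<notin> N" using kX by (simp add: N_def)
    have skN: "star k \<in> N" using Xstar[OF kX] k(1) by (simp add: N_def J_def)
    have skX: "star k \<notin> X" using Xstar[OF kX] .
    have mU0: "m U0 = m U2 - 1"
      using fsum_flip'[OF UC(1) k0J' False, of N "\<lambda>_. 1"] k0N sk0N by (simp add: m_def U0_def i0_def)
    have mV: "m V = m U0 + 1"
      using fsum_flip[OF U0sub kJ' kbar, of N "\<lambda>_. 1"] kN skN by (simp add: m_def V_def)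
    have sU0: "\<sigma> U0 = \<sigma> U2 + xr k0"
      using fsum_flip'[OF UC(1) k0J' False, of X xr] k0X' sk0X by (simp add: \<sigma>_def U0_def i0_def)
    have sV: "\<sigma> V = \<sigma> U0 - xr k"
      using fsum_flip[OF U0sub kJ' kbar, of X xr] kX skX by (simp add: \<sigma>_def V_def)
    have "ereal (xr k + pv) \<le> ereal (xr k0 + pu)"
      using k(3) fk fk0 Xfin[OF kX] pv by simp
    then have ineq: "xr k + pv \<le> xr k0 + pu" by simp
    have mVM: "m V = M" using mV mU0 OptU2 by (simp add: Opt_def)
    have "W V \<le> W U2" unfolding W_def using pv pu sV sU0 ineq by simp
    then have "Opt V" using OptU2 VC mVM unfolding Opt_def by auto
    then show ?thesis using that k0V by blast
  qed
  have UC: "U \<subseteq> {1..n}" "p U \<noteq> \<infinity>" using OptU by (auto simp: Opt_def C_def)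
  have k0J': "k0 \<in> Jset n" using k0J by (simp add: J_def)
  define T where "T = sym_diff U {i0}"
  obtain pu where pu: "p U = ereal pu" using UC pnm[OF UC(1)] by (cases "p U") auto
  define t where "t = xr k0 - pu"
  define d where "d = (\<lambda>k. cocirc_vec n p T k + ereal t)"
  have Tsub: "T \<subseteq> {1..n}" using flip_sub[OF UC(1) k0J'] by (simp add: T_def i0_def)
  have k0T: "k0 \<notin> bar n T" using flip_self[OF UC(1) k0J'] k0U by (simp add: T_def i0_def)
  have TU: "sym_diff T {i0} = U" by (auto simp: T_def)
  have dk0: "d k0 = x k0"
    unfolding d_def cocirc_alt using k0J' k0T TU pu Xfin[OF k0X'] by (simp add: i0_def t_def)
  have dC: "d \<in> cocircuits n p"
  proof -
    have "k0 \<in> supp n d" using dk0 Xfin[OF k0X'] k0J' by (simp add: supp_def)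
    then show ?thesis unfolding cocircuits_def using Tsub by (auto simp: d_def)
  qed
  have mT: "m T = m U + 1"
    using fsum_flip[OF UC(1) k0J' k0U, of N "\<lambda>_. 1"] k0N sk0N by (simp add: m_def T_def i0_def)
  have sT: "\<sigma> T = \<sigma> U - xr k0"
    using fsum_flip[OF UC(1) k0J' k0U, of X xr] k0X' sk0X by (simp add: \<sigma>_def T_def i0_def)
  have "x k \<le> d k" for k
  proof (cases "k \<in> Jset n \<and> k \<notin> bar n T")
    case False
    then have "d k = \<infinity>" unfolding d_def cocirc_alt by auto
    then show ?thesis by simp
  next
    case True
    then have kJ': "k \<in> Jset n" and kT: "k \<notin> bar n T" by auto
    show ?thesis
    proof (cases "k = k0")
      case True then show ?thesis using dk0 by simp
    next
      case kne: False
      have idxne: "idx k0 \<noteq> idx k"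
      proof
        assume "idx k0 = idx k"
        then have "k = k0 \<or> k = star k0" using idx_eq by metis
        then show False using kne kT k0T star_bar[OF Tsub k0J'] by auto
      qed
      have kU: "k \<notin> bar n U"
        using flip_other[OF UC(1) k0J' kJ' idxne[symmetric]] kT by (simp add: T_def i0_def)
      define V where "V = sym_diff T {idx k}"
      have Vsub: "V \<subseteq> {1..n}" using flip_sub[OF Tsub kJ'] by (simp add: V_def)
      have dk: "d k = p V + ereal t" unfolding d_def cocirc_alt V_def using kJ' kT by simp
      show ?thesis
      proof (cases "p V = \<infinity>")
        case True then show ?thesis using dk by simp
      next
        case pV: False
        obtain pv where pv: "p V = ereal pv" using pV pnm[OF Vsub] by (cases "p V") auto
        have VC: "V \<in> C" using Vsub pV by (simp add: C_def)
        have mV: "m V = m T - (if star k \<in> N then 1 else 0) + (if k \<in> N then 1 else 0)"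
          using fsum_flip'[OF Tsub kJ' kT, of N "\<lambda>_. 1"] by (simp add: m_def V_def)
        have mUM: "m U = M" using OptU by (simp add: Opt_def)
        have kX: "k \<in> X"
        proof (rule ccontr)
          assume "k \<notin> X"
          then have "k \<in> N" using kJ' by (simp add: N_def J_def)
          then have "m V \<ge> M + 1" using mV mT mUM by auto
          then show False using mM[OF VC] by simp
        qed
        have skN: "star k \<in> N" using Xstar[OF kX] kJ' by (simp add: N_def J_def)
        have kN: "k \<notin> N" using kX by (simp add: N_def)
        have mVM: "m V = M" using mV mT mUM skN kN by simp
        have sV: "\<sigma> V = \<sigma> T + xr k"
          using fsum_flip'[OF Tsub kJ' kT, of X xr] kX Xstar[OF kX] by (simp add: \<sigma>_def V_def)
        have "W U \<le> W V" using OptU VC mVM by (simp add: Opt_def)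
        then have "xr k \<le> pv + t" unfolding W_def using pu pv sV sT by (simp add: t_def)
        then show ?thesis using dk pv Xfin[OF kX] by simp
      qed
    qed
  qed
  then show ?thesis using dC dk0 by blast
qed

theorem theorem6p9:
  fixes n :: nat and p :: "nat set \<Rightarrow> ereal"
  assumes "tropical_wick n p"
  shows "cocycle_space n p = {x. admissible_vec n x \<and> x \<in> trop_hull (cocircuits n p)}"
proof (intro set_eqI iffI)
  fix x assume xQ: "x \<in> cocycle_space n p"
  have adm: "admissible_vec n x" using xQ by (simp add: cocycle_space_def)
  have "\<forall>k0\<in>supp n x. \<exists>d. d \<in> cocircuits n p \<and> (\<forall>k. x k \<le> d k) \<and> d k0 = x k0"
    using key[OF assms xQ] by blast
  then obtain D where D: "\<And>k0. k0 \<in> supp n x \<Longrightarrow> D k0 \<in> cocircuits n p \<and> (\<forall>k. x k \<le> D k0 k) \<and> D k0 k0 = x k0"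
    by metis
  define F where "F = D ` supp n x"
  have finF: "finite F" unfolding F_def supp_def by simp
  have FC: "F \<subseteq> cocircuits n p" using D by (auto simp: F_def)
  have xe: "x = (\<lambda>k. INF a\<in>F. (\<lambda>_. 0::ereal) a + a k)"
  proof
    fix k
    have ge: "x k \<le> (INF a\<in>F. a k)" using D by (auto simp: F_def intro!: INF_greatest)
    have le: "(INF a\<in>F. a k) \<le> x k"
    proof (cases "k \<in> supp n x")
      case True
      then have "(INF a\<in>F. a k) \<le> D k k" unfolding F_def by (intro INF_lower) auto
      then show ?thesis using D[OF True] by simp
    next
      case False
      then have "x k = \<infinity>" using adm by (auto simp: supp_def admissible_vec_def tvec_def)
      then show ?thesis by simp
    qed
    show "x k = (INF a\<in>F. (\<lambda>_. 0::ereal) a + a k)" using ge le by simp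
  qed
  have "x \<in> trop_hull (cocircuits n p)"
    unfolding trop_hull_def using finF FC xe by (intro CollectI exI[of _ F] exI[of _ "\<lambda>_. 0::ereal"]) auto
  then show "x \<in> {x. admissible_vec n x \<and> x \<in> trop_hull (cocircuits n p)}" using adm by simp
next
  fix x assume "x \<in> {x. admissible_vec n x \<and> x \<in> trop_hull (cocircuits n p)}"
  then have adm: "admissible_vec n x" and xh: "x \<in> trop_hull (cocircuits n p)" by auto
  from xh obtain F lam where F: "finite F" "F \<subseteq> cocircuits n p"
    and xe: "x = (\<lambda>k. INF a\<in>F. lam a + a k)" unfolding trop_hull_def by blast
  have "trop_orth n x c" if c: "c \<in> circuits n p" for c
  proof -
    from c obtain S s where S: "S \<subseteq> {1..n}" and ce: "c = (\<lambda>k. circ_vec n p S k + ereal s)"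
      unfolding circuits_def by blast
    have "min_twice (Jset n) (\<lambda>k. a k + c k)" if a: "a \<in> F" for a
    proof -
      from a F(2) obtain T t where T: "T \<subseteq> {1..n}" and ae: "a = (\<lambda>k. cocirc_vec n p T k + ereal t)"
        unfolding cocircuits_def by blast
      show ?thesis unfolding ae ce using cocirc_circ_orth[OF assms S T] by simp
    qed
    then have "min_twice (Jset n) (\<lambda>k. (INF a\<in>F. lam a + a k) + c k)"
      by (intro hull_orth) (auto simp: F(1))
    then show ?thesis unfolding trop_orth_def xe .
  qed
  then show "x \<in> cocycle_space n p" using adm by (simp add: cocycle_space_def)
qed

end
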